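(* Let $f_1,\dots,f_n:\mathbb{R}^d\to\mathbb{R}$ be convex and differentiable, each with $L$-Lipschitz gradient, and let $f=\frac1n\sum_{i=1}^n f_i$ be $\lambda$-strongly convex with minimizer $x^*$. Fix $S\subseteq[n]$, a step size $\eta>0$, an epoch length $m\ge 1$, and parameters $c>0$, $\beta>0$, $\kappa>1$. Define $$\gamma=\kappa\Big[1-\big(1-\tfrac1\kappa\big)^m\Big]\Big(2c\eta\big(1-L\eta(1+\beta)\big)-\tfrac1n-\tfrac{2c}{\kappa\lambda}\Big),$$ $$\theta=\max\Big\{\tfrac{2c}{\gamma\lambda}\big(1-\tfrac1\kappa\big)^m+\tfrac{2Lc\eta^2}{\gamma}\big(1+\tfrac1\beta\big)\kappa\Big[1-\big(1-\tfrac1\kappa\big)^m\Big],\ \big(1-\tfrac1\kappa\big)^m\Big\}.$$ Suppose $$\frac1\kappa+2Lc\eta^2\Big(1+\frac1\beta\Big)\le\frac1n,\qquad \gamma>0,\qquad \theta<1,$$ and that the epoch-end selection probabilities satisfy $p_j\propto(1-\frac1\kappa)^{m-j}$, $j=1,\dots,m$. Then the iterates of the synchronous HSAG algorithm (described in the context) satisfy, for every $k\ge 0$, $$\mathbb{E}\Big[f(\tilde x^{k+1})-f(x^* )+\tfrac1\gamma\tilde G_{k+1}\Big]\le\theta\,\mathbb{E}\Big[f(\tilde x^{k})-f(x^* )+\tfrac1\gamma\tilde G_{k}\Big].$$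
   Context: Notation: $[n]=\{1,\dots,n\}$; for a differentiable convex $g$, the Bregman divergence is $D_g(x,y)=g(x)-g(y)-\langle\nabla g(y),x-y\rangle$. Synchronous HSAG algorithm (generic variance-reduced method with the HSAG schedule and epoch length $m$): start from $x^0\in\mathbb{R}^d$, set $\tilde x^0=x^0$ and $\alpha_i^0=x^0$ for all $i\in[n]$. The algorithm runs in epochs; epoch $k+1$ ($k=0,1,2,\dots$) consists of the steps $t=km,\dots,km+m-1$, and at its start $x^{km}=\tilde x^k$. At each step $t$, an index $i_t$ is drawn uniformly from $[n]$, independently of everything before, and $$x^{t+1}=x^t-\eta\Big(\nabla f_{i_t}(x^t)-\nabla f_{i_t}(\alpha_{i_t}^t)+\tfrac1n\textstyle\sum_{i=1}^n\nabla f_i(\alpha_i^t)\Big).$$ The auxiliary points $\alpha_i^t$ are updated by the HSAG schedule: for $i\in S$, $\alpha_i^{t+1}=x^t$ if $i_t=i$ and $\alpha_i^{t+1}=\alpha_i^t$ otherwise (SAGA-type); for $i\notin S$, $\alpha_i^t=\tilde x^k$ for all $t$ in epoch $k+1$ (SVRG-type, refreshed to the current iterate at the start of each epoch). At the end of epoch $k+1$, $\tilde x^{k+1}$ is chosen at random from $\{x^{km},x^{km+1},\dots,x^{km+m-1}\}$, selecting $x^{km+j-1}$ with probability $p_j$ ($j=1,\dots,m$), and $x^{(k+1)m}$ is set to $\tilde x^{k+1}$. (Special cases: $S=[n]$ gives SAGA, $S=\emptyset$ gives SVRG.) Define $\tilde G_k=\frac1n\sum_{i\in S}\big(f_i(\alpha_i^{km})-f_i(x^*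 )-\langle\nabla f_i(x^* ),\alpha_i^{km}-x^*\rangle\big)$. Expectations are over all random indices and epoch-end selections. *)

theory Defs
  imports "HOL-Analysis.Analysis" "HOL-Probability.Probability"
begin

definition strongly_convex_on :: "'a::real_normed_vector set \<Rightarrow> real \<Rightarrow> ('a \<Rightarrow> real) \<Rightarrow> bool" where
  "strongly_convex_on A lam F \<longleftrightarrow>
     (\<forall>x\<in>A. \<forall>y\<in>A. \<forall>t::real. 0 \<le> t \<and> t \<le> 1 \<longrightarrow>
        F ((1 - t) *\<^sub>R x + t *\<^sub>R y) \<le> (1 - t) * F x + t * F y - lam / 2 * t * (1 - t) * (norm (x - y))\<^sup>2)"

text \<open>State: (current iterate x^t, auxiliary points alpha^t). g i is the gradient of f_i.
  For i not in S the alpha stays fixed within the epoch (it equals the epoch anchor).\<close>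
definition hsag_step :: "nat \<Rightarrow> nat set \<Rightarrow> real \<Rightarrow> (nat \<Rightarrow> 'a \<Rightarrow> 'a::real_vector)
    \<Rightarrow> 'a \<times> (nat \<Rightarrow> 'a) \<Rightarrow> nat \<Rightarrow> 'a \<times> (nat \<Rightarrow> 'a)" where
  "hsag_step n S \<eta> g st i =
     (let x = fst st; \<alpha> = snd st in
       (x - \<eta> *\<^sub>R (g i x - g i (\<alpha> i) + (1 / real n) *\<^sub>R (\<Sum>j\<in>{1..n}. g j (\<alpha> j))),
        if i \<in> S then \<alpha>(i := x) else \<alpha>))"

text \<open>Run j steps with fresh uniform indices from {1..n}; returns the list of iterates
  before each step [x^t, ..., x^(t+j-1)] together with the final state.\<close>
fun hsag_run :: "nat \<Rightarrow> nat set \<Rightarrow> real \<Rightarrow> (nat \<Rightarrow> 'a \<Rightarrow> 'a::real_vector) \<Rightarrow> nat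
    \<Rightarrow> 'a \<times> (nat \<Rightarrow> 'a) \<Rightarrow> ('a list \<times> ('a \<times> (nat \<Rightarrow> 'a))) pmf" where
  "hsag_run n S \<eta> g 0 st = return_pmf ([], st)"
| "hsag_run n S \<eta> g (Suc j) st =
     bind_pmf (pmf_of_set {1..n})
       (\<lambda>i. map_pmf (\<lambda>(xs, st'). (fst st # xs, st')) (hsag_run n S \<eta> g j (hsag_step n S \<eta> g st i)))"

definition sel_pmf :: "nat \<Rightarrow> real \<Rightarrow> nat pmf" where
  "sel_pmf m \<kappa> = embed_pmf (\<lambda>j. if j \<in> {1..m}
       then (1 - 1/\<kappa>) ^ (m - j) / (\<Sum>l\<in>{1..m}. (1 - 1/\<kappa>) ^ (m - l)) else 0)"

text \<open>One epoch: run m steps from (x~^k, alpha^{km}), pick x~^{k+1} = x^{km+j-1} with prob. p_j,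
  keep SAGA-type points (i in S) and refresh SVRG-type points (i not in S) to x~^{k+1}.
  The resulting state is (x~^{k+1}, alpha^{(k+1)m}).\<close>
definition hsag_epoch :: "nat \<Rightarrow> nat set \<Rightarrow> real \<Rightarrow> (nat \<Rightarrow> 'a \<Rightarrow> 'a::real_vector) \<Rightarrow> nat \<Rightarrow> real
    \<Rightarrow> 'a \<times> (nat \<Rightarrow> 'a) \<Rightarrow> ('a \<times> (nat \<Rightarrow> 'a)) pmf" where
  "hsag_epoch n S \<eta> g m \<kappa> st =
     bind_pmf (hsag_run n S \<eta> g m st)
       (\<lambda>(xs, st'). map_pmf (\<lambda>j. let y = xs ! (j - 1) in (y, \<lambda>i. if i \<in> S then snd st' i else y))
                      (sel_pmf m \<kappa>))"

text \<open>Joint distribution of (x~^k, alpha^{km}).\<close>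
fun hsag_dist :: "nat \<Rightarrow> nat set \<Rightarrow> real \<Rightarrow> (nat \<Rightarrow> 'a \<Rightarrow> 'a::real_vector) \<Rightarrow> nat \<Rightarrow> real
    \<Rightarrow> 'a \<Rightarrow> nat \<Rightarrow> ('a \<times> (nat \<Rightarrow> 'a)) pmf" where
  "hsag_dist n S \<eta> g m \<kappa> x0 0 = return_pmf (x0, \<lambda>_. x0)"
| "hsag_dist n S \<eta> g m \<kappa> x0 (Suc k) = bind_pmf (hsag_dist n S \<eta> g m \<kappa> x0 k) (hsag_epoch n S \<eta> g m \<kappa>)"

definition Gtilde :: "nat \<Rightarrow> nat set \<Rightarrow> (nat \<Rightarrow> 'a \<Rightarrow> real) \<Rightarrow> (nat \<Rightarrow> 'a \<Rightarrow> 'a::real_inner)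
    \<Rightarrow> 'a \<Rightarrow> (nat \<Rightarrow> 'a) \<Rightarrow> real" where
  "Gtilde n S f g xs \<alpha> = (1 / real n) * (\<Sum>i\<in>S. f i (\<alpha> i) - f i xs - inner (g i xs) (\<alpha> i - xs))"

end

theory Submission
  imports Defs
begin


lemma line_deriv:
  fixes f :: "'a::real_inner \<Rightarrow> real"
  assumes grad: "\<And>x. (f has_derivative (\<lambda>h. inner (g x) h)) (at x)"
  shows "((\<lambda>t. f (x + t *\<^sub>R d)) has_real_derivative inner (g (x + t *\<^sub>R d)) d) (at t)"
proof -
  have l: "((\<lambda>t. x + t *\<^sub>R d) has_derivative (\<lambda>s. s *\<^sub>R d)) (at t)"
    by (auto intro!: derivative_eq_intros)
  have "((\<lambda>t. f (x + t *\<^sub>R d)) has_derivative (\<lambda>s. inner (g (x + t *\<^sub>R d)) (s *\<^sub>R d))) (at t)"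
    using has_derivative_compose[OF l grad] by (simp add: o_def)
  moreover have "(\<lambda>s. inner (g (x + t *\<^sub>R d)) (s *\<^sub>R d)) = (*) (inner (g (x + t *\<^sub>R d)) d)"
    by (auto simp: algebra_simps)
  ultimately show ?thesis by (simp add: has_field_derivative_def)
qed

lemma descent:
  fixes f :: "'a::real_inner \<Rightarrow> real"
  assumes grad: "\<And>x. (f has_derivative (\<lambda>h. inner (g x) h)) (at x)"
    and lip: "\<And>x y. norm (g x - g y) \<le> L * norm (x - y)"
  shows "f y \<le> f x + inner (g x) (y - x) + L / 2 * (norm (y - x))\<^sup>2"
proof -
  define d where "d = y - x"
  define \<psi> where "\<psi> t = f (x + t *\<^sub>R d) - f x - t * inner (g x) d - L / 2 * t\<^sup>2 * (norm d)\<^sup>2" for t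
  have D: "(\<psi> has_real_derivative (inner (g (x + t *\<^sub>R d)) d - inner (g x) d - L * t * (norm d)\<^sup>2)) (at t)" for t
    unfolding \<psi>_def
    by (rule derivative_eq_intros line_deriv[OF grad] refl | simp)+
  have "\<psi> 1 \<le> \<psi> 0"
  proof (rule DERIV_nonpos_imp_nonincreasing[of 0 1])
    fix t :: real assume t: "0 \<le> t" "t \<le> 1"
    have "inner (g (x + t *\<^sub>R d)) d - inner (g x) d = inner (g (x + t *\<^sub>R d) - g x) d"
      by (simp add: inner_diff_left)
    also have "\<dots> \<le> norm (g (x + t *\<^sub>R d) - g x) * norm d" by (rule norm_cauchy_schwarz)
    also have "\<dots> \<le> (L * norm (t *\<^sub>R d)) * norm d"
      using lip[of "x + t *\<^sub>R d" x] by (intro mult_right_mono) auto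
    also have "\<dots> = L * t * (norm d)\<^sup>2" using t by (simp add: power2_eq_square)
    finally show "\<exists>y. (\<psi> has_real_derivative y) (at t) \<and> y \<le> 0" using D by fastforce
  qed simp
  thus ?thesis by (simp add: \<psi>_def d_def)
qed

lemma tangent:
  fixes f :: "'a::real_inner \<Rightarrow> real"
  assumes conv: "convex_on UNIV f"
    and grad: "\<And>x. (f has_derivative (\<lambda>h. inner (g x) h)) (at x)"
  shows "f x + inner (g x) (y - x) \<le> f y"
proof -
  define d where "d = y - x"
  define h where "h t = f (x + t *\<^sub>R d)" for t
  have "convex_on UNIV h"
  proof (rule convex_onI)
    fix t a b :: real assume "t > 0" "t < 1"
    have "x + ((1 - t) *\<^sub>R a + t *\<^sub>R b) *\<^sub>R d = (1 - t) *\<^sub>R (x + a *\<^sub>R d) + t *\<^sub>R (x + b *\<^sub>R d)"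
      by (simp add: algebra_simps)
    thus "h ((1 - t) *\<^sub>R a + t *\<^sub>R b) \<le> (1 - t) * h a + t * h b"
      unfolding h_def using convex_onD[OF conv, of t "x + a *\<^sub>R d" "x + b *\<^sub>R d"] \<open>t>0\<close> \<open>t<1\<close> by simp
  qed simp
  moreover have "(h has_real_derivative inner (g x) d) (at 0 within UNIV)"
    unfolding h_def using line_deriv[OF grad, of x d 0] by simp
  ultimately have "h 1 - h 0 \<ge> inner (g x) d * (1 - 0)"
    by (intro convex_on_imp_above_tangent[where A=UNIV]) auto
  thus ?thesis by (simp add: h_def d_def)
qed

lemma cocoercive:
  fixes f :: "'a::real_inner \<Rightarrow> real"
  assumes conv: "convex_on UNIV f"
    and grad: "\<And>x. (f has_derivative (\<lambda>h. inner (g x) h)) (at x)"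
    and lip: "\<And>x y. norm (g x - g y) \<le> L * norm (x - y)"
    and L: "L \<ge> 0"
  shows "(norm (g x - g y))\<^sup>2 \<le> 2 * L * (f x - f y - inner (g y) (x - y))"
proof (cases "L = 0")
  case True
  then have "g x = g y" using lip[of x y] by simp
  then show ?thesis using True by simp
next
  case False
  then have Lp: "L > 0" using L by simp
  define u where "u = g x - g y"
  define w where "w = x - (1 / L) *\<^sub>R u"
  have 1: "f w \<le> f x + inner (g x) (w - x) + L / 2 * (norm (w - x))\<^sup>2"
    by (rule descent[OF grad lip])
  have 2: "f y + inner (g y) (w - y) \<le> f w" by (rule tangent[OF conv grad])
  have "inner (g y) (w - y) = inner (g y) (x - y) + inner (g y) (w - x)"
    by (simp add: inner_diff_right)
  with 1 2 have "f y + inner (g y) (x - y) \<le> f x + inner u (w - x) + L / 2 * (norm (w - x))\<^sup>2"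
    by (simp add: u_def inner_diff_left)
  moreover have "inner u (w - x) = - (1/L) * (norm u)\<^sup>2"
    by (simp add: w_def power2_norm_eq_inner)
  moreover have "L / 2 * (norm (w - x))\<^sup>2 = (1 / (2 * L)) * (norm u)\<^sup>2"
    using Lp by (simp add: w_def power2_eq_square field_simps)
  ultimately have "f y + inner (g y) (x - y) \<le> f x - (1 / (2 * L)) * (norm u)\<^sup>2"
    using Lp by (simp add: field_simps)
  hence "(1 / (2 * L)) * (norm u)\<^sup>2 \<le> f x - f y - inner (g y) (x - y)" by simp
  hence "2 * L * ((1 / (2 * L)) * (norm u)\<^sup>2) \<le> 2 * L * (f x - f y - inner (g y) (x - y))"
    using Lp by (intro mult_left_mono) auto
  thus ?thesis using Lp by (simp add: u_def)
qed



lemma young: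
  fixes a w :: "'a::real_inner"
  assumes "\<beta> > 0"
  shows "(norm (a - w))\<^sup>2 \<le> (1 + \<beta>) * (norm a)\<^sup>2 + (1 + 1/\<beta>) * (norm w)\<^sup>2"
proof -
  have "0 \<le> inner (\<beta> *\<^sub>R a + w) (\<beta> *\<^sub>R a + w)" by simp
  also have "\<dots> = \<beta>\<^sup>2 * inner a a + 2 * \<beta> * inner a w + inner w w"
    by (simp add: inner_add_left inner_add_right inner_commute power2_eq_square algebra_simps)
  finally have X: "0 \<le> \<beta>\<^sup>2 * inner a a + 2 * \<beta> * inner a w + inner w w" .
  have "\<beta> * inner a a + 2 * inner a w + (1/\<beta>) * inner w w
      = (\<beta>\<^sup>2 * inner a a + 2 * \<beta> * inner a w + inner w w) / \<beta>"
    using assms by (simp add: field_simps power2_eq_square)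
  hence "0 \<le> \<beta> * inner a a + 2 * inner a w + (1/\<beta>) * inner w w"
    using X assms by simp
  moreover have "(norm (a - w))\<^sup>2 = inner a a - 2 * inner a w + inner w w"
    by (simp add: power2_norm_eq_inner inner_diff_left inner_diff_right inner_commute)
  ultimately show ?thesis by (simp add: power2_norm_eq_inner algebra_simps)
qed

lemma norm_sq_diff_scale:
  fixes a b :: "'a::real_inner"
  shows "(norm (a - t *\<^sub>R b))\<^sup>2 = (norm a)\<^sup>2 - 2 * t * inner b a + t\<^sup>2 * (norm b)\<^sup>2"
  unfolding power2_norm_eq_inner
  by (simp add: inner_diff_left inner_diff_right inner_commute algebra_simps power2_eq_square)

lemma sum_sq_centered:
  fixes b :: "nat \<Rightarrow> 'a::real_inner"
  assumes "finite A" "card A > 0"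
  shows "(\<Sum>i\<in>A. (norm (b i - (1 / real (card A)) *\<^sub>R (\<Sum>j\<in>A. b j)))\<^sup>2) \<le> (\<Sum>i\<in>A. (norm (b i))\<^sup>2)"
proof -
  define N where "N = real (card A)"
  define s where "s = (\<Sum>j\<in>A. b j)"
  have Np: "N > 0" using assms by (simp add: N_def)
  have "(\<Sum>i\<in>A. (norm (b i - (1/N) *\<^sub>R s))\<^sup>2)
      = (\<Sum>i\<in>A. (norm (b i))\<^sup>2 - 2 * (1/N) * inner s (b i) + (1/N)\<^sup>2 * (norm s)\<^sup>2)"
    by (simp add: norm_sq_diff_scale)
  also have "\<dots> = (\<Sum>i\<in>A. (norm (b i))\<^sup>2) - 2 * (1/N) * inner s s + N * ((1/N)\<^sup>2 * (norm s)\<^sup>2)"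
    by (simp add: sum.distrib sum_subtractf sum_distrib_left[symmetric] inner_sum_right s_def N_def
         sum_divide_distrib[symmetric])
  also have "\<dots> = (\<Sum>i\<in>A. (norm (b i))\<^sup>2) - (1/N) * (norm s)\<^sup>2"
    using Np unfolding power2_norm_eq_inner by (simp add: power2_eq_square field_simps)
  also have "\<dots> \<le> (\<Sum>i\<in>A. (norm (b i))\<^sup>2)" using Np by simp
  finally show ?thesis by (simp add: N_def s_def)
qed



locale hs =
  fixes f :: "nat \<Rightarrow> 'a::euclidean_space \<Rightarrow> real"
    and g :: "nat \<Rightarrow> 'a \<Rightarrow> 'a"
    and n :: nat and S :: "nat set"
    and L lam \<eta> c \<beta> \<kappa> :: real
    and xs :: 'a
  assumes n_pos: "n \<ge> 1"
    and conv: "\<And>i. i \<in> {1..n} \<Longrightarrow> convex_on UNIV (f i)"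
    and grad: "\<And>i x. i \<in> {1..n} \<Longrightarrow> (f i has_derivative (\<lambda>h. inner (g i x) h)) (at x)"
    and lip: "\<And>i x y. i \<in> {1..n} \<Longrightarrow> norm (g i x - g i y) \<le> L * norm (x - y)"
    and lam_pos: "lam > 0"
    and sconv: "strongly_convex_on UNIV lam (\<lambda>x. (1 / real n) * (\<Sum>i\<in>{1..n}. f i x))"
    and xs_min: "\<And>y. (1 / real n) * (\<Sum>i\<in>{1..n}. f i xs) \<le> (1 / real n) * (\<Sum>i\<in>{1..n}. f i y)"
    and S_sub: "S \<subseteq> {1..n}"
    and eta_pos: "\<eta> > 0"
    and c_pos: "c > 0" and beta_pos: "\<beta> > 0" and kappa_gt: "\<kappa> > 1"
    and cond1: "1/\<kappa> + 2 * L * c * \<eta>\<^sup>2 * (1 + 1/\<beta>) \<le> 1 / real n"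
begin

definition "Fv x = (1 / real n) * (\<Sum>i\<in>{1..n}. f i x)"
definition "Dv i x = f i x - f i xs - inner (g i xs) (x - xs)"
definition "Hv z = (1 / real n) * (\<Sum>i\<in>{1..n} - S. Dv i z)"

lemma Gt_eq: "Gtilde n S f g xs \<alpha> = (1 / real n) * (\<Sum>i\<in>S. Dv i (\<alpha> i))"
  by (simp add: Gtilde_def Dv_def)

lemma npos: "real n > 0" using n_pos by simp
lemma finS: "finite S" using S_sub finite_subset by blast

lemma L_nonneg: "L \<ge> 0"
proof -
  obtain e :: 'a where e: "e \<noteq> 0" using nonzero_Basis SOME_Basis by blast
  have "0 \<le> norm (g 1 e - g 1 0)" by simp
  also have "\<dots> \<le> L * norm (e - 0)" using lip[of 1 e 0] n_pos by simp
  finally show ?thesis using e by (simp add: zero_le_mult_iff)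
qed

lemma Dv_nonneg: assumes "i \<in> {1..n}" shows "Dv i x \<ge> 0"
proof -
  have "f i xs + inner (g i xs) (x - xs) \<le> f i x"
    by (rule tangent) (use conv grad assms in auto)
  thus ?thesis by (simp add: Dv_def)
qed

lemma coco: "i \<in> {1..n} \<Longrightarrow> (norm (g i x - g i xs))\<^sup>2 \<le> 2 * L * Dv i x"
  unfolding Dv_def by (rule cocoercive[OF _ _ _ L_nonneg]) (use conv grad lip in auto)

lemma grad_zero: "(\<Sum>i\<in>{1..n}. g i xs) = 0"
proof -
  define v where "v = (1 / real n) *\<^sub>R (\<Sum>i\<in>{1..n}. g i xs)"
  define t where "t = 1 / (L + 1)"
  have tp: "t > 0" using L_nonneg by (simp add: t_def)
  define y where "y = xs - t *\<^sub>R v"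
  have "\<And>i. i \<in> {1..n} \<Longrightarrow> f i y \<le> f i xs + inner (g i xs) (y - xs) + L / 2 * (norm (y - xs))\<^sup>2"
    by (rule descent[OF grad lip])
  hence "(\<Sum>i\<in>{1..n}. f i y) \<le> (\<Sum>i\<in>{1..n}. f i xs + inner (g i xs) (y - xs) + L / 2 * (norm (y - xs))\<^sup>2)"
    by (rule sum_mono)
  also have "\<dots> = (\<Sum>i\<in>{1..n}. f i xs) + inner (\<Sum>i\<in>{1..n}. g i xs) (y - xs) + real n * (L / 2 * (norm (y - xs))\<^sup>2)"
    by (simp add: sum.distrib inner_sum_left)
  also have "inner (\<Sum>i\<in>{1..n}. g i xs) (y - xs) = - real n * t * inner v v"
    using npos by (simp add: y_def v_def)
  also have "(norm (y - xs))\<^sup>2 = t\<^sup>2 * inner v v"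
    unfolding power2_norm_eq_inner by (simp add: y_def power2_eq_square)
  finally have 1: "(\<Sum>i\<in>{1..n}. f i y) \<le> (\<Sum>i\<in>{1..n}. f i xs) - real n * t * inner v v + real n * (L / 2 * (t\<^sup>2 * inner v v))"
    by simp
  have "(\<Sum>i\<in>{1..n}. f i xs) \<le> (\<Sum>i\<in>{1..n}. f i y)"
    using xs_min[of y] npos by (simp add: field_simps)
  with 1 have "real n * (t * inner v v) \<le> real n * (L / 2 * t\<^sup>2 * inner v v)"
    by (simp add: algebra_simps)
  hence "t * inner v v \<le> L / 2 * t\<^sup>2 * inner v v" using npos by simp
  hence "t * inner v v * (1 - L / 2 * t) \<le> 0" by (simp add: algebra_simps power2_eq_square)
  moreover have "1 - L / 2 * t > 0" using L_nonneg by (simp add: t_def field_simps)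
  ultimately have "t * inner v v \<le> 0" by (simp add: mult_le_0_iff)
  hence "inner v v \<le> 0" using tp by (simp add: mult_le_0_iff)
  hence "v = 0" by (metis inner_gt_zero_iff not_le)
  thus ?thesis using npos by (simp add: v_def)
qed

lemma gap: "Fv x - Fv xs = (1 / real n) * (\<Sum>i\<in>{1..n}. Dv i x)"
proof -
  have "(\<Sum>i\<in>{1..n}. Dv i x) = (\<Sum>i\<in>{1..n}. f i x) - (\<Sum>i\<in>{1..n}. f i xs) - inner (\<Sum>i\<in>{1..n}. g i xs) (x - xs)"
    by (simp add: Dv_def sum_subtractf inner_sum_left)
  thus ?thesis using grad_zero npos by (simp add: Fv_def field_simps)
qed

lemma gap_nonneg: "Fv x - Fv xs \<ge> 0"
  using xs_min[of x] by (simp add: Fv_def)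

lemma sc: "lam / 2 * (norm (x - xs))\<^sup>2 \<le> Fv x - Fv xs"
proof (rule ccontr)
  define a where "a = lam / 2 * (norm (x - xs))\<^sup>2"
  define \<Delta> where "\<Delta> = Fv x - Fv xs"
  assume "\<not> ?thesis"
  hence aD: "a > \<Delta>" by (simp add: a_def \<Delta>_def)
  have D0: "\<Delta> \<ge> 0" using gap_nonneg by (simp add: \<Delta>_def)
  define t where "t = (a - \<Delta>) / (2 * a)"
  have ap: "a > 0" using aD D0 by simp
  have t0: "t > 0" "t \<le> 1" using aD ap D0 by (auto simp: t_def field_simps)
  have "Fv ((1 - t) *\<^sub>R xs + t *\<^sub>R x) \<le> (1 - t) * Fv xs + t * Fv x - lam / 2 * t * (1 - t) * (norm (xs - x))\<^sup>2"
    using sconv t0 unfolding strongly_convex_on_def Fv_def by auto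
  moreover have "Fv xs \<le> Fv ((1 - t) *\<^sub>R xs + t *\<^sub>R x)" using xs_min unfolding Fv_def by blast
  moreover have "norm (xs - x) = norm (x - xs)" by (rule norm_minus_commute)
  ultimately have "t * ((1 - t) * a) \<le> t * \<Delta>"
    by (simp add: a_def \<Delta>_def algebra_simps)
  hence "(1 - t) * a \<le> \<Delta>" using t0 by simp
  moreover have "(1 - t) * a = (a + \<Delta>) / 2" using ap by (simp add: t_def field_simps)
  ultimately show False using aD by simp
qed

end


lemma step_arith:
  fixes rn c \<eta> lam \<kappa> \<beta> L I \<Delta> V G Hh EG N :: real
  assumes rn: "rn > 0" and c: "c > 0" and eta: "\<eta> > 0" and lam: "lam > 0" and k: "\<kappa> > 1"
    and b: "\<beta> > 0" and L: "L \<ge> 0"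
    and hI: "I \<ge> \<Delta>" and hV: "V \<le> (1+\<beta>)*2*L*\<Delta> + (1+1/\<beta>)*2*L*(G+Hh)"
    and hG: "EG \<le> (1 - 1/rn)*G + \<Delta>/rn" and hN: "lam/2*N \<le> \<Delta>" and G: "G \<ge> 0"
    and cond1: "1/\<kappa> + 2 * L * c * \<eta>\<^sup>2 * (1 + 1/\<beta>) \<le> 1 / rn"
  shows "c*N - 2*c*\<eta>*I + c*\<eta>\<^sup>2*V + EG \<le> (1-1/\<kappa>)*(c*N+G)
     - (2*c*\<eta>*(1-L*\<eta>*(1+\<beta>)) - 1/rn - 2*c/(\<kappa>*lam))*\<Delta> + 2*L*c*\<eta>\<^sup>2*(1+1/\<beta>)*Hh"
proof -
  have h1: "c*\<eta>\<^sup>2*V \<le> c*\<eta>\<^sup>2*((1+\<beta>)*2*L*\<Delta> + (1+1/\<beta>)*2*L*(G+Hh))"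
    using hV c by (intro mult_left_mono) auto
  have h2: "2*c*\<eta>*\<Delta> \<le> 2*c*\<eta>*I" using hI c eta by (intro mult_left_mono) auto
  have h3: "(2 * L * c * \<eta>\<^sup>2 * (1 + 1/\<beta>)) * G \<le> (1/rn - 1/\<kappa>) * G"
    using cond1 G by (intro mult_right_mono) auto
  have h4: "(2*c/(\<kappa>*lam)) * (lam/2*N) \<le> (2*c/(\<kappa>*lam)) * \<Delta>"
    using hN c k lam by (intro mult_left_mono) auto
  have e4: "(2*c/(\<kappa>*lam)) * (lam/2*N) = c/\<kappa> * N" using lam k by (simp add: field_simps)
  have e1: "c*\<eta>\<^sup>2*((1+\<beta>)*2*L*\<Delta> + (1+1/\<beta>)*2*L*(G+Hh)) =
     2*L*c*\<eta>\<^sup>2*(1+\<beta>)*\<Delta> + (2 * L * c * \<eta>\<^sup>2 * (1 + 1/\<beta>)) * G + 2*L*c*\<eta>\<^sup>2*(1+1/\<beta>)*Hh"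
    using b by (simp add: algebra_simps divide_simps)
  have e2: "(1-1/\<kappa>)*(c*N+G)
     - (2*c*\<eta>*(1-L*\<eta>*(1+\<beta>)) - 1/rn - 2*c/(\<kappa>*lam))*\<Delta> + 2*L*c*\<eta>\<^sup>2*(1+1/\<beta>)*Hh
     = c*N - c/\<kappa>*N + G - G/\<kappa> - 2*c*\<eta>*\<Delta> + 2*L*c*\<eta>\<^sup>2*(1+\<beta>)*\<Delta> + \<Delta>/rn + (2*c/(\<kappa>*lam))*\<Delta>
       + 2*L*c*\<eta>\<^sup>2*(1+1/\<beta>)*Hh"
    by (simp add: algebra_simps power2_eq_square)
  have e3: "(1 - 1/rn)*G = G - G/rn" by (simp add: algebra_simps)
  have e5: "(1/rn - 1/\<kappa>) * G = G/rn - G/\<kappa>" by (simp add: algebra_simps)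
  show ?thesis using h1 h2 h3 h4 e4 e1 e2 hG e3 e5 by (smt (verit))
qed



context hs begin

definition "\<rho> = 1 - 1/\<kappa>"
definition "K = 2 * L * c * \<eta>\<^sup>2 * (1 + 1/\<beta>)"
definition "\<delta> = 2 * c * \<eta> * (1 - L * \<eta> * (1 + \<beta>)) - 1 / real n - 2 * c / (\<kappa> * lam)"
definition "Gt \<alpha> = Gtilde n S f g xs \<alpha>"
definition "Tv st = c * (norm (fst st - xs))\<^sup>2 + Gt (snd st)"

lemma card_n: "card {1..n} = n" by simp

lemma Gt_nonneg: "Gt \<alpha> \<ge> 0"
  unfolding Gt_def Gt_eq using S_sub npos by (auto intro!: divide_nonneg_nonneg sum_nonneg Dv_nonneg)

lemma Gt_upd: assumes "i \<in> S"
  shows "Gt (\<alpha>(i := x)) = Gt \<alpha> + (1 / real n) * (Dv i x - Dv i (\<alpha> i))"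
proof -
  have "(\<Sum>j\<in>S. Dv j ((\<alpha>(i := x)) j)) = Dv i x + (\<Sum>j\<in>S - {i}. Dv j ((\<alpha>(i := x)) j))"
    using assms finS by (simp add: sum.remove)
  also have "(\<Sum>j\<in>S - {i}. Dv j ((\<alpha>(i := x)) j)) = (\<Sum>j\<in>S - {i}. Dv j (\<alpha> j))"
    by (rule sum.cong) auto
  also have "(\<Sum>j\<in>S - {i}. Dv j (\<alpha> j)) = (\<Sum>j\<in>S. Dv j (\<alpha> j)) - Dv i (\<alpha> i)"
    using assms finS by (simp add: sum.remove)
  finally show ?thesis unfolding Gt_def Gt_eq using npos by (simp add: field_simps)
qed

lemma step_bound:
  assumes inv: "\<forall>i\<in>{1..n} - S. \<alpha> i = z"
  shows "(\<Sum>i\<in>{1..n}. Tv (hsag_step n S \<eta> g (x, \<alpha>) i)) / real n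
           \<le> \<rho> * Tv (x, \<alpha>) - \<delta> * (Fv x - Fv xs) + K * Hv z"
proof -
  define A where "A = {1..n::nat}"
  have finA: "finite A" and cardA: "card A = n" by (auto simp: A_def)
  define gb where "gb = (1 / real n) *\<^sub>R (\<Sum>j\<in>A. g j (\<alpha> j))"
  define v where "v i = g i x - g i (\<alpha> i) + gb" for i
  define a where "a i = g i x - g i xs" for i
  define b where "b i = g i (\<alpha> i) - g i xs" for i
  define N where "N = (norm (x - xs))\<^sup>2"
  define \<Delta> where "\<Delta> = Fv x - Fv xs"
  have rn: "real n > 0" by (rule npos)
  have step_eq: "hsag_step n S \<eta> g (x, \<alpha>) i = (x - \<eta> *\<^sub>R v i, if i \<in> S then \<alpha>(i := x) else \<alpha>)" for i
    by (simp add: hsag_step_def v_def gb_def A_def)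
  have PN: "(\<Sum>i\<in>A. (norm (x - \<eta> *\<^sub>R v i - xs))\<^sup>2)
      = real n * N - 2 * \<eta> * (\<Sum>i\<in>A. inner (v i) (x - xs)) + \<eta>\<^sup>2 * (\<Sum>i\<in>A. (norm (v i))\<^sup>2)"
  proof -
    have "(norm (x - \<eta> *\<^sub>R v i - xs))\<^sup>2 = N - 2 * \<eta> * inner (v i) (x - xs) + \<eta>\<^sup>2 * (norm (v i))\<^sup>2" for i
    proof -
      have eqv: "x - \<eta> *\<^sub>R v i - xs = (x - xs) - \<eta> *\<^sub>R v i" by (simp add: algebra_simps)
      show ?thesis by (simp only: eqv norm_sq_diff_scale N_def)
    qed
    hence "(\<Sum>i\<in>A. (norm (x - \<eta> *\<^sub>R v i - xs))\<^sup>2)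
        = (\<Sum>i\<in>A. N - 2 * \<eta> * inner (v i) (x - xs) + \<eta>\<^sup>2 * (norm (v i))\<^sup>2)"
      by simp
    also have "\<dots> = real n * N - 2 * \<eta> * (\<Sum>i\<in>A. inner (v i) (x - xs)) + \<eta>\<^sup>2 * (\<Sum>i\<in>A. (norm (v i))\<^sup>2)"
      by (simp add: sum.distrib sum_subtractf sum_distrib_left cardA)
    finally show ?thesis .
  qed
  have sumv: "(\<Sum>i\<in>A. v i) = (\<Sum>i\<in>A. g i x)"
    using rn by (simp add: v_def gb_def sum.distrib sum_subtractf cardA sum_constant_scaleR)
  have PI: "(\<Sum>i\<in>A. inner (v i) (x - xs)) \<ge> real n * \<Delta>"
  proof -
    have "(\<Sum>i\<in>A. inner (v i) (x - xs)) = (\<Sum>i\<in>A. inner (g i x) (x - xs))"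
      by (simp add: inner_sum_left[symmetric] sumv)
    also have "\<dots> \<ge> (\<Sum>i\<in>A. f i x - f i xs)"
    proof (rule sum_mono)
      fix i assume i: "i \<in> A"
      have "f i x + inner (g i x) (xs - x) \<le> f i xs"
        by (rule tangent) (use conv grad i in \<open>auto simp: A_def\<close>)
      moreover have "inner (g i x) (xs - x) = - inner (g i x) (x - xs)"
        by (simp add: inner_diff_right)
      ultimately show "f i x - f i xs \<le> inner (g i x) (x - xs)" by simp
    qed
    moreover have "(\<Sum>i\<in>A. f i x - f i xs) = real n * \<Delta>"
      using rn by (simp add: \<Delta>_def Fv_def A_def sum_subtractf field_simps)
    ultimately show ?thesis by simp
  qed
  have sumb: "(\<Sum>j\<in>A. b j) = (\<Sum>j\<in>A. g j (\<alpha> j))"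
    using grad_zero by (simp add: b_def sum_subtractf A_def)
  have vab0: "v i = a i - (b i - (1 / real (card A)) *\<^sub>R (\<Sum>j\<in>A. g j (\<alpha> j)))" for i
    by (simp add: v_def a_def b_def gb_def cardA)
  have vab: "v i = a i - (b i - (1 / real (card A)) *\<^sub>R (\<Sum>j\<in>A. b j))" for i
    unfolding sumb by (rule vab0)
  have PV: "(\<Sum>i\<in>A. (norm (v i))\<^sup>2) \<le> (1 + \<beta>) * (\<Sum>i\<in>A. (norm (a i))\<^sup>2) + (1 + 1/\<beta>) * (\<Sum>i\<in>A. (norm (b i))\<^sup>2)"
  proof -
    have "(\<Sum>i\<in>A. (norm (v i))\<^sup>2) \<le> (\<Sum>i\<in>A. (1 + \<beta>) * (norm (a i))\<^sup>2
          + (1 + 1/\<beta>) * (norm (b i - (1 / real (card A)) *\<^sub>R (\<Sum>j\<in>A. b j)))\<^sup>2)"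
      unfolding vab by (intro sum_mono young beta_pos)
    also have "\<dots> = (1 + \<beta>) * (\<Sum>i\<in>A. (norm (a i))\<^sup>2)
          + (1 + 1/\<beta>) * (\<Sum>i\<in>A. (norm (b i - (1 / real (card A)) *\<^sub>R (\<Sum>j\<in>A. b j)))\<^sup>2)"
      by (simp add: sum.distrib sum_distrib_left)
    also have "\<dots> \<le> (1 + \<beta>) * (\<Sum>i\<in>A. (norm (a i))\<^sup>2) + (1 + 1/\<beta>) * (\<Sum>i\<in>A. (norm (b i))\<^sup>2)"
      using beta_pos finA cardA n_pos
      by (intro add_left_mono mult_left_mono sum_sq_centered) auto
    finally show ?thesis .
  qed
  have PA: "(\<Sum>i\<in>A. (norm (a i))\<^sup>2) \<le> 2 * L * (real n * \<Delta>)"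
  proof -
    have "(\<Sum>i\<in>A. (norm (a i))\<^sup>2) \<le> (\<Sum>i\<in>A. 2 * L * Dv i x)"
      unfolding a_def by (rule sum_mono, rule coco) (simp add: A_def)
    also have "\<dots> = 2 * L * (real n * \<Delta>)"
      using rn by (simp add: sum_distrib_left[symmetric] \<Delta>_def gap A_def)
    finally show ?thesis .
  qed
  have splitD: "(\<Sum>i\<in>A. Dv i (\<alpha> i)) = real n * (Gt \<alpha> + Hv z)"
  proof -
    have "(\<Sum>i\<in>A. Dv i (\<alpha> i)) = (\<Sum>i\<in>A - S. Dv i (\<alpha> i)) + (\<Sum>i\<in>S. Dv i (\<alpha> i))"
      using S_sub finA by (simp add: A_def sum.subset_diff)
    also have "(\<Sum>i\<in>A - S. Dv i (\<alpha> i)) = (\<Sum>i\<in>A - S. Dv i z)"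
      using inv by (intro sum.cong) (auto simp: A_def)
    finally show ?thesis using rn by (simp add: Gt_def Gt_eq Hv_def A_def field_simps)
  qed
  have PB: "(\<Sum>i\<in>A. (norm (b i))\<^sup>2) \<le> 2 * L * (real n * (Gt \<alpha> + Hv z))"
  proof -
    have "(\<Sum>i\<in>A. (norm (b i))\<^sup>2) \<le> (\<Sum>i\<in>A. 2 * L * Dv i (\<alpha> i))"
      unfolding b_def by (rule sum_mono, rule coco) (simp add: A_def)
    also have "\<dots> = 2 * L * (real n * (Gt \<alpha> + Hv z))"
      by (simp add: sum_distrib_left[symmetric] splitD)
    finally show ?thesis .
  qed
  have PG: "(\<Sum>i\<in>A. Gt (if i \<in> S then \<alpha>(i := x) else \<alpha>)) \<le> (real n - 1) * Gt \<alpha> + \<Delta>"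
  proof -
    have "(\<Sum>i\<in>A. Gt (if i \<in> S then \<alpha>(i := x) else \<alpha>))
        = (\<Sum>i\<in>A. Gt \<alpha> + (if i \<in> S then (1 / real n) * (Dv i x - Dv i (\<alpha> i)) else 0))"
      by (intro sum.cong) (auto simp: Gt_upd)
    also have "\<dots> = real n * Gt \<alpha> + (\<Sum>i\<in>S. (1 / real n) * (Dv i x - Dv i (\<alpha> i)))"
      using S_sub finA by (simp add: sum.distrib cardA sum.If_cases Int_absorb1 A_def)
    also have "(\<Sum>i\<in>S. (1 / real n) * (Dv i x - Dv i (\<alpha> i))) = (1 / real n) * (\<Sum>i\<in>S. Dv i x) - Gt \<alpha>"
      by (simp add: sum_subtractf sum_divide_distrib[symmetric] Gt_def Gt_eq diff_divide_distrib)
    also have "(\<Sum>i\<in>S. Dv i x) \<le> (\<Sum>i\<in>A. Dv i x)"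
      using S_sub by (intro sum_mono2) (auto simp: A_def intro: Dv_nonneg)
    hence "(1 / real n) * (\<Sum>i\<in>S. Dv i x) \<le> \<Delta>"
      using rn by (simp add: \<Delta>_def gap A_def divide_right_mono)
    finally show ?thesis by (simp add: algebra_simps)
  qed
  have LHS: "(\<Sum>i\<in>A. Tv (hsag_step n S \<eta> g (x, \<alpha>) i)) / real n
      = c * N - 2 * c * \<eta> * ((\<Sum>i\<in>A. inner (v i) (x - xs)) / real n)
        + c * \<eta>\<^sup>2 * ((\<Sum>i\<in>A. (norm (v i))\<^sup>2) / real n)
        + (\<Sum>i\<in>A. Gt (if i \<in> S then \<alpha>(i := x) else \<alpha>)) / real n"
  proof -
    have "(\<Sum>i\<in>A. Tv (hsag_step n S \<eta> g (x, \<alpha>) i))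
        = c * (\<Sum>i\<in>A. (norm (x - \<eta> *\<^sub>R v i - xs))\<^sup>2) + (\<Sum>i\<in>A. Gt (if i \<in> S then \<alpha>(i := x) else \<alpha>))"
      by (simp add: step_eq Tv_def sum.distrib sum_distrib_left)
    thus ?thesis unfolding PN using rn by (simp add: field_simps)
  qed
  have I': "(\<Sum>i\<in>A. inner (v i) (x - xs)) / real n \<ge> \<Delta>"
    using PI rn by (simp add: field_simps)
  have V': "(\<Sum>i\<in>A. (norm (v i))\<^sup>2) / real n \<le> (1+\<beta>)*2*L*\<Delta> + (1+1/\<beta>)*2*L*(Gt \<alpha> + Hv z)"
  proof -
    have "(\<Sum>i\<in>A. (norm (v i))\<^sup>2) \<le> (1 + \<beta>) * (2 * L * (real n * \<Delta>)) + (1 + 1/\<beta>) * (2 * L * (real n * (Gt \<alpha> + Hv z)))"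
    proof -
      have "(1 + \<beta>) * (\<Sum>i\<in>A. (norm (a i))\<^sup>2) \<le> (1 + \<beta>) * (2 * L * (real n * \<Delta>))"
        using PA beta_pos by (intro mult_left_mono) auto
      moreover have "(1 + 1/\<beta>) * (\<Sum>i\<in>A. (norm (b i))\<^sup>2) \<le> (1 + 1/\<beta>) * (2 * L * (real n * (Gt \<alpha> + Hv z)))"
        using PB beta_pos by (intro mult_left_mono) auto
      ultimately show ?thesis using PV by linarith
    qed
    thus ?thesis using rn by (simp add: field_simps)
  qed
  have G': "(\<Sum>i\<in>A. Gt (if i \<in> S then \<alpha>(i := x) else \<alpha>)) / real n \<le> (1 - 1/real n) * Gt \<alpha> + \<Delta> / real n"
    using PG rn by (simp add: field_simps)
  have N': "lam / 2 * N \<le> \<Delta>" unfolding N_def \<Delta>_def by (rule sc)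
  have "c * N - 2 * c * \<eta> * ((\<Sum>i\<in>A. inner (v i) (x - xs)) / real n)
        + c * \<eta>\<^sup>2 * ((\<Sum>i\<in>A. (norm (v i))\<^sup>2) / real n)
        + (\<Sum>i\<in>A. Gt (if i \<in> S then \<alpha>(i := x) else \<alpha>)) / real n
     \<le> (1-1/\<kappa>)*(c*N+Gt \<alpha>)
     - (2*c*\<eta>*(1-L*\<eta>*(1+\<beta>)) - 1/real n - 2*c/(\<kappa>*lam))*\<Delta> + 2*L*c*\<eta>\<^sup>2*(1+1/\<beta>)*Hv z"
    by (rule step_arith[OF rn c_pos eta_pos lam_pos kappa_gt beta_pos L_nonneg I' V' G' N' Gt_nonneg cond1])
  thus ?thesis using LHS by (simp add: A_def \<rho>_def \<delta>_def K_def Tv_def N_def \<Delta>_def)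
qed

end


lemma E_bind:
  fixes h :: "'b \<Rightarrow> real"
  assumes "finite (set_pmf p)" "\<And>x. x \<in> set_pmf p \<Longrightarrow> finite (set_pmf (f x))"
  shows "measure_pmf.expectation (p \<bind> f) h = measure_pmf.expectation p (\<lambda>x. measure_pmf.expectation (f x) h)"
proof -
  have "measure_pmf.expectation (p \<bind> f) h = (\<Sum>a\<in>set_pmf p. pmf p a *\<^sub>R measure_pmf.expectation (f a) h)"
    using assms by (intro pmf_expectation_bind) auto
  also have "\<dots> = measure_pmf.expectation p (\<lambda>x. measure_pmf.expectation (f x) h)"
    using assms by (subst integral_measure_pmf[of "set_pmf p"]) auto
  finally show ?thesis .
qed

lemma E_mono:
  fixes u v :: "'b \<Rightarrow> real"
  assumes "finite (set_pmf p)" "\<And>x. x \<in> set_pmf p \<Longrightarrow> u x \<le> v x"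
  shows "measure_pmf.expectation p u \<le> measure_pmf.expectation p v"
proof -
  have "measure_pmf.expectation p u = (\<Sum>a\<in>set_pmf p. u a * pmf p a)"
    using assms by (intro integral_measure_pmf_real) auto
  also have "\<dots> \<le> (\<Sum>a\<in>set_pmf p. v a * pmf p a)"
    using assms by (intro sum_mono mult_right_mono) auto
  also have "\<dots> = measure_pmf.expectation p v"
    using assms by (intro integral_measure_pmf_real[symmetric]) auto
  finally show ?thesis .
qed

lemma fin_run: "n \<ge> 1 \<Longrightarrow> finite (set_pmf (hsag_run n S \<eta> g j st))"
  by (induction j arbitrary: st) auto

lemma sel_props:
  fixes \<kappa> :: real
  assumes k: "\<kappa> > 1" and m: "m \<ge> 1"
  shows "pmf (sel_pmf m \<kappa>) j = (if j \<in> {1..m} then (1 - 1/\<kappa>) ^ (m - j) / (\<Sum>l\<in>{1..m}. (1 - 1/\<kappa>) ^ (m - l)) else 0)"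
    and "set_pmf (sel_pmf m \<kappa>) \<subseteq> {1..m}"
proof -
  define w where "w j = (if j \<in> {1..m} then (1 - 1/\<kappa>) ^ (m - j) / (\<Sum>l\<in>{1..m}. (1 - 1/\<kappa>) ^ (m - l)) else 0)" for j
  have rp: "1 - 1/\<kappa> > 0" using k by (simp add: field_simps)
  have Wp: "(\<Sum>l\<in>{1..m}. (1 - 1/\<kappa>) ^ (m - l)) > 0"
    using rp m by (intro sum_pos) auto
  have nn: "\<And>x. 0 \<le> w x" using rp Wp by (auto simp: w_def)
  have "(\<integral>\<^sup>+x. ennreal (w x) \<partial>count_space UNIV) = (\<Sum>x\<in>{1..m}. ennreal (w x))"
    by (rule nn_integral_count_space') (auto simp: w_def)
  also have "\<dots> = ennreal (\<Sum>x\<in>{1..m}. w x)"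
    using nn by (simp add: sum_ennreal)
  also have "(\<Sum>x\<in>{1..m}. w x) = 1"
    using Wp by (simp add: w_def sum_divide_distrib[symmetric])
  finally have pr: "(\<integral>\<^sup>+x. ennreal (w x) \<partial>count_space UNIV) = 1" by simp
  have "sel_pmf m \<kappa> = embed_pmf w"
    unfolding sel_pmf_def by (rule arg_cong[where f=embed_pmf]) (simp add: w_def fun_eq_iff)
  hence pw: "pmf (sel_pmf m \<kappa>) j = w j" for j
    using pmf_embed_pmf[OF nn pr] by simp
  thus "pmf (sel_pmf m \<kappa>) j = w j" .
  show "set_pmf (sel_pmf m \<kappa>) \<subseteq> {1..m}"
  proof
    fix x assume "x \<in> set_pmf (sel_pmf m \<kappa>)"
    hence "w x \<noteq> 0" using pw[of x] by (simp add: set_pmf_iff)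
    thus "x \<in> {1..m}" unfolding w_def by (auto split: if_splits)
  qed
qed

lemma fin_epoch: "n \<ge> 1 \<Longrightarrow> \<kappa> > 1 \<Longrightarrow> m \<ge> 1 \<Longrightarrow> finite (set_pmf (hsag_epoch n S \<eta> g m \<kappa> st))"
  unfolding hsag_epoch_def using finite_subset[OF sel_props(2)[of \<kappa> m] finite_atLeastAtMost] fin_run[of n S \<eta> g m st]
  by (auto intro!: finite_imageI intro: finite_subset[OF _ finite_atLeastAtMost])

lemma fin_dist: "n \<ge> 1 \<Longrightarrow> \<kappa> > 1 \<Longrightarrow> m \<ge> 1 \<Longrightarrow> finite (set_pmf (hsag_dist n S \<eta> g m \<kappa> x0 k))"
  by (induction k) (auto intro: fin_epoch)

lemma inv_dist: "(x, \<alpha>) \<in> set_pmf (hsag_dist n S \<eta> g m \<kappa> x0 k) \<Longrightarrow> i \<notin> S \<Longrightarrow> \<alpha> i = x"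
  by (induction k arbitrary: x \<alpha>) (auto simp: hsag_epoch_def Let_def split: prod.splits)



lemma E_add_const:
  fixes u :: "'b \<Rightarrow> real"
  assumes "finite (set_pmf p)"
  shows "measure_pmf.expectation p (\<lambda>x. a + u x) = a + measure_pmf.expectation p u"
  using assms by (simp add: integral_add integrable_measure_pmf_finite)

context hs begin

lemma step_inv:
  assumes "\<forall>i\<in>{1..n} - S. \<alpha> i = z"
  shows "\<forall>t\<in>{1..n} - S. snd (hsag_step n S \<eta> g (x, \<alpha>) i) t = z"
  using assms by (auto simp: hsag_step_def Let_def)

lemma rho_pos: "\<rho> > 0" using kappa_gt by (simp add: \<rho>_def field_simps)

lemma run_bound:
  assumes "\<forall>i\<in>{1..n} - S. snd st i = z"
  shows "measure_pmf.expectation (hsag_run n S \<eta> g j st)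
     (\<lambda>(l, st'). (\<Sum>t<j. \<rho>^(j - Suc t) * \<delta> * (Fv (l!t) - Fv xs)) + Tv st')
     \<le> \<rho>^j * Tv st + K * Hv z * (\<Sum>t<j. \<rho>^t)"
  using assms
proof (induction j arbitrary: st)
  case 0
  then show ?case by simp
next
  case (Suc j)
  obtain x \<alpha> where st: "st = (x, \<alpha>)" by (cases st)
  define A where "A = {1..n::nat}"
  define c0 where "c0 = \<rho>^j * \<delta> * (Fv x - Fv xs)"
  define \<Phi> where "\<Phi> = (\<lambda>(l::'a list, st'::'a \<times> (nat \<Rightarrow> 'a)). (\<Sum>t<j. \<rho>^(j - Suc t) * \<delta> * (Fv (l!t) - Fv xs)) + Tv st')"
  have finA: "finite A" "A \<noteq> {}" "card A = n" using n_pos by (auto simp: A_def)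
  have inv: "\<forall>i\<in>{1..n} - S. \<alpha> i = z" using Suc.prems st by simp
  have shift: "(\<lambda>(l, st'). (\<Sum>t<Suc j. \<rho>^(Suc j - Suc t) * \<delta> * (Fv (l!t) - Fv xs)) + Tv st')
        \<circ> (\<lambda>(l, st'). (x # l, st')) = (\<lambda>p. c0 + \<Phi> p)"
    by (auto simp del: sum.lessThan_Suc simp: fun_eq_iff \<Phi>_def c0_def sum.lessThan_Suc_shift)
  have IH: "measure_pmf.expectation (hsag_run n S \<eta> g j (hsag_step n S \<eta> g (x, \<alpha>) i)) \<Phi>
      \<le> \<rho>^j * Tv (hsag_step n S \<eta> g (x, \<alpha>) i) + K * Hv z * (\<Sum>t<j. \<rho>^t)" for i
    unfolding \<Phi>_def by (rule Suc.IH) (rule step_inv[OF inv])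
  have "measure_pmf.expectation (hsag_run n S \<eta> g (Suc j) st)
     (\<lambda>(l, st'). (\<Sum>t<Suc j. \<rho>^(Suc j - Suc t) * \<delta> * (Fv (l!t) - Fv xs)) + Tv st')
     = (\<Sum>i\<in>A. measure_pmf.expectation (hsag_run n S \<eta> g j (hsag_step n S \<eta> g (x, \<alpha>) i)) (\<lambda>p. c0 + \<Phi> p) / real n)"
  proof -
    have r: "hsag_run n S \<eta> g (Suc j) st = pmf_of_set A \<bind>
       (\<lambda>i. map_pmf (\<lambda>(l, st'). (x # l, st')) (hsag_run n S \<eta> g j (hsag_step n S \<eta> g (x, \<alpha>) i)))"
      by (simp add: st A_def)
    have fm: "finite (set_pmf (map_pmf (\<lambda>(l, st'). (x # l, st')) (hsag_run n S \<eta> g j (hsag_step n S \<eta> g (x, \<alpha>) i))))" for i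
      using fin_run[OF n_pos, of S \<eta> g j "hsag_step n S \<eta> g (x, \<alpha>) i"] unfolding set_map_pmf by (rule finite_imageI)
    show ?thesis
      unfolding r
      apply (subst pmf_expectation_bind_pmf_of_set[OF finA(2) finA(1) fm])
      apply (rule sum.cong[OF refl])
      apply (simp only: integral_map_pmf finA(3) real_scaleR_def)
      apply (subst shift[unfolded o_def, symmetric])
      apply (simp add: divide_inverse mult.commute)
      done
  qed
  also have "\<dots> = (\<Sum>i\<in>A. (c0 + measure_pmf.expectation (hsag_run n S \<eta> g j (hsag_step n S \<eta> g (x, \<alpha>) i)) \<Phi>) / real n)"
    by (rule sum.cong[OF refl]) (simp only: E_add_const[OF fin_run[OF n_pos]])
  also have "\<dots> \<le> (\<Sum>i\<in>A. (c0 + (\<rho>^j * Tv (hsag_step n S \<eta> g (x, \<alpha>) i) + K * Hv z * (\<Sum>t<j. \<rho>^t))) / real n)"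
    using IH npos by (intro sum_mono divide_right_mono add_left_mono) auto
  also have "\<dots> = c0 + \<rho>^j * ((\<Sum>i\<in>A. Tv (hsag_step n S \<eta> g (x, \<alpha>) i)) / real n) + K * Hv z * (\<Sum>t<j. \<rho>^t)"
    using npos finA by (simp add: sum.distrib sum_divide_distrib[symmetric] sum_distrib_left[symmetric] field_simps)
  also have "\<dots> \<le> c0 + \<rho>^j * (\<rho> * Tv (x, \<alpha>) - \<delta> * (Fv x - Fv xs) + K * Hv z) + K * Hv z * (\<Sum>t<j. \<rho>^t)"
    using step_bound[OF inv, of x] rho_pos unfolding A_def
    by (intro add_right_mono add_left_mono mult_left_mono) auto
  also have "\<dots> = \<rho>^Suc j * Tv st + K * Hv z * (\<Sum>t<Suc j. \<rho>^t)"
    by (simp add: c0_def st algebra_simps)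
  finally show ?case .
qed

end


locale hs2 = hs +
  fixes m :: nat and \<gamma> \<theta> :: real
  assumes m_pos: "m \<ge> 1"
    and gamma_def: "\<gamma> = \<kappa> * (1 - (1 - 1/\<kappa>) ^ m) *
        (2 * c * \<eta> * (1 - L * \<eta> * (1 + \<beta>)) - 1 / real n - 2 * c / (\<kappa> * lam))"
    and theta_def: "\<theta> = max (2 * c / (\<gamma> * lam) * (1 - 1/\<kappa>) ^ m
          + 2 * L * c * \<eta>\<^sup>2 / \<gamma> * (1 + 1/\<beta>) * \<kappa> * (1 - (1 - 1/\<kappa>) ^ m))
        ((1 - 1/\<kappa>) ^ m)"
    and gamma_pos: "\<gamma> > 0"
begin

definition "W = (\<Sum>l\<in>{1..m}. \<rho> ^ (m - l))"
definition "\<Phi> st = Fv (fst st) - Fv xs + (1 / \<gamma>) * Gt (snd st)"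

lemma W_eq: "W = \<kappa> * (1 - \<rho> ^ m)"
proof -
  have "W = (\<Sum>k<m. \<rho> ^ (m - Suc k))"
    unfolding W_def using sum.atLeast1_atMost_eq[of "\<lambda>l. \<rho> ^ (m - l)" m] by simp
  also have "\<dots> = (\<Sum>k<m. \<rho> ^ k)" by (rule sum.nat_diff_reindex)
  also have "\<dots> = (1 - \<rho>^m) / (1 - \<rho>)"
    using kappa_gt by (simp add: sum_gp_strict \<rho>_def)
  also have "\<dots> = \<kappa> * (1 - \<rho> ^ m)" using kappa_gt by (simp add: \<rho>_def)
  finally show ?thesis .
qed

lemma W_pos: "W > 0"
  unfolding W_def using rho_pos m_pos by (intro sum_pos) auto

lemma gamma_eq: "\<gamma> = W * \<delta>"
  unfolding gamma_def W_eq \<rho>_def \<delta>_def by simp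

lemma Gt_cong: "(\<And>i. i \<in> S \<Longrightarrow> \<alpha> i = \<alpha>' i) \<Longrightarrow> Gt \<alpha> = Gt \<alpha>'"
  unfolding Gt_def Gt_eq by simp

lemma sel_E:
  "measure_pmf.expectation (map_pmf (\<lambda>j. let y = l ! (j - 1) in (y, \<lambda>i. if i \<in> S then snd st' i else y)) (sel_pmf m \<kappa>)) \<Phi>
   \<le> (1 / \<gamma>) * ((\<Sum>t<m. \<rho>^(m - Suc t) * \<delta> * (Fv (l!t) - Fv xs)) + Tv st')"
proof -
  let ?p = "\<lambda>j. \<rho> ^ (m - j) / W"
  have pm: "pmf (sel_pmf m \<kappa>) j = (if j \<in> {1..m} then ?p j else 0)" for j
    using sel_props(1)[OF kappa_gt m_pos, of j] by (simp add: W_def \<rho>_def)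
  have "measure_pmf.expectation (map_pmf (\<lambda>j. let y = l ! (j - 1) in (y, \<lambda>i. if i \<in> S then snd st' i else y)) (sel_pmf m \<kappa>)) \<Phi>
      = measure_pmf.expectation (sel_pmf m \<kappa>) (\<lambda>j. Fv (l ! (j - 1)) - Fv xs + (1/\<gamma>) * Gt (snd st'))"
  proof -
    have "\<Phi> (let y = l ! (j - 1) in (y, \<lambda>i. if i \<in> S then snd st' i else y))
        = Fv (l ! (j - 1)) - Fv xs + (1/\<gamma>) * Gt (snd st')" for j
    proof -
      have "Gt (\<lambda>i. if i \<in> S then snd st' i else l ! (j - 1)) = Gt (snd st')" by (rule Gt_cong) simp
      thus ?thesis unfolding \<Phi>_def Let_def by simp
    qed
    thus ?thesis by simp
  qed
  also have "\<dots> = (\<Sum>j\<in>{1..m}. (Fv (l ! (j - 1)) - Fv xs + (1/\<gamma>) * Gt (snd st')) * pmf (sel_pmf m \<kappa>) j)"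
    using sel_props(2)[OF kappa_gt m_pos] by (intro integral_measure_pmf_real) auto
  also have "\<dots> = (\<Sum>j\<in>{1..m}. ?p j * (Fv (l ! (j - 1)) - Fv xs)) + (1/\<gamma>) * Gt (snd st') * (\<Sum>j\<in>{1..m}. ?p j)"
  proof -
    have "(\<Sum>j\<in>{1..m}. (Fv (l ! (j - 1)) - Fv xs + (1/\<gamma>) * Gt (snd st')) * pmf (sel_pmf m \<kappa>) j)
       = (\<Sum>j\<in>{1..m}. ?p j * (Fv (l ! (j - 1)) - Fv xs) + (1/\<gamma>) * Gt (snd st') * ?p j)"
      by (intro sum.cong refl) (simp add: pm algebra_simps)
    thus ?thesis by (simp only: sum.distrib sum_distrib_left[symmetric])
  qed
  also have "(\<Sum>j\<in>{1..m}. ?p j) = 1"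
    using W_pos by (simp add: sum_divide_distrib[symmetric] W_def)
  also have "(\<Sum>j\<in>{1..m}. ?p j * (Fv (l ! (j - 1)) - Fv xs))
      = (1 / W) * (\<Sum>t<m. \<rho>^(m - Suc t) * (Fv (l!t) - Fv xs))"
    using sum.atLeast1_atMost_eq[of "\<lambda>j. ?p j * (Fv (l ! (j - 1)) - Fv xs)" m]
    by (simp add: sum_distrib_left)
  also have "(1 / W) * (\<Sum>t<m. \<rho>^(m - Suc t) * (Fv (l!t) - Fv xs))
      = (1 / \<gamma>) * (\<Sum>t<m. \<rho>^(m - Suc t) * \<delta> * (Fv (l!t) - Fv xs))"
  proof -
    have dp: "\<delta> > 0" using gamma_pos W_pos unfolding gamma_eq by (simp add: zero_less_mult_iff)
    have "(\<Sum>t<m. \<rho>^(m - Suc t) * \<delta> * (Fv (l!t) - Fv xs)) = \<delta> * (\<Sum>t<m. \<rho>^(m - Suc t) * (Fv (l!t) - Fv xs))"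
      by (subst sum_distrib_left) (simp add: mult_ac)
    thus ?thesis using dp W_pos unfolding gamma_eq by simp
  qed
  finally have "measure_pmf.expectation (map_pmf (\<lambda>j. let y = l ! (j - 1) in (y, \<lambda>i. if i \<in> S then snd st' i else y)) (sel_pmf m \<kappa>)) \<Phi>
     = (1 / \<gamma>) * ((\<Sum>t<m. \<rho>^(m - Suc t) * \<delta> * (Fv (l!t) - Fv xs)) + Gt (snd st'))"
    by (simp add: algebra_simps)
  also have "\<dots> \<le> (1 / \<gamma>) * ((\<Sum>t<m. \<rho>^(m - Suc t) * \<delta> * (Fv (l!t) - Fv xs)) + Tv st')"
    using gamma_pos c_pos by (intro mult_left_mono add_left_mono) (auto simp: Tv_def)
  finally show ?thesis .
qed

end


context hs2 begin

lemma W_sum: "W = (\<Sum>k<m. \<rho> ^ k)"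
proof -
  have "W = (\<Sum>k<m. \<rho> ^ (m - Suc k))"
    unfolding W_def using sum.atLeast1_atMost_eq[of "\<lambda>l. \<rho> ^ (m - l)" m] by simp
  also have "\<dots> = (\<Sum>k<m. \<rho> ^ k)" by (rule sum.nat_diff_reindex)
  finally show ?thesis .
qed

lemma Hv_le: "Hv z \<le> Fv z - Fv xs"
proof -
  have "(\<Sum>i\<in>{1..n} - S. Dv i z) \<le> (\<Sum>i\<in>{1..n}. Dv i z)"
    by (intro sum_mono2) (auto intro: Dv_nonneg)
  thus ?thesis unfolding Hv_def gap using npos by (simp add: divide_right_mono)
qed

lemma K_nonneg: "K \<ge> 0"
  unfolding K_def using L_nonneg c_pos beta_pos by simp

lemma epoch_bound:
  assumes inv: "\<forall>i\<in>{1..n} - S. \<alpha> i = x"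
  shows "measure_pmf.expectation (hsag_epoch n S \<eta> g m \<kappa> (x, \<alpha>)) \<Phi> \<le> \<theta> * \<Phi> (x, \<alpha>)"
proof -
  define R where "R = hsag_run n S \<eta> g m (x, \<alpha>)"
  define \<Psi> where "\<Psi> = (\<lambda>(l::'a list, st'::'a \<times> (nat \<Rightarrow> 'a)). (\<Sum>t<m. \<rho>^(m - Suc t) * \<delta> * (Fv (l!t) - Fv xs)) + Tv st')"
  have finR: "finite (set_pmf R)" unfolding R_def by (rule fin_run[OF n_pos])
  have finS: "finite (set_pmf (sel_pmf m \<kappa>))"
    using finite_subset[OF sel_props(2)[OF kappa_gt m_pos] finite_atLeastAtMost] .
  have "measure_pmf.expectation (hsag_epoch n S \<eta> g m \<kappa> (x, \<alpha>)) \<Phi>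
     = measure_pmf.expectation R (\<lambda>p. measure_pmf.expectation
         ((\<lambda>(l, st'). map_pmf (\<lambda>j. let y = l ! (j - 1) in (y, \<lambda>i. if i \<in> S then snd st' i else y)) (sel_pmf m \<kappa>)) p) \<Phi>)"
    unfolding hsag_epoch_def R_def[symmetric]
    by (rule E_bind[OF finR]) (use finS in \<open>auto split: prod.splits\<close>)
  also have "\<dots> \<le> measure_pmf.expectation R (\<lambda>p. (1 / \<gamma>) * \<Psi> p)"
  proof (rule E_mono[OF finR])
    fix p assume "p \<in> set_pmf R"
    obtain l st' where p: "p = (l, st')" by (cases p)
    show "measure_pmf.expectation
         ((\<lambda>(l, st'). map_pmf (\<lambda>j. let y = l ! (j - 1) in (y, \<lambda>i. if i \<in> S then snd st' i else y)) (sel_pmf m \<kappa>)) p) \<Phi>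
        \<le> (1 / \<gamma>) * \<Psi> p"
      using sel_E[of l st'] unfolding p \<Psi>_def prod.case .
  qed
  also have "\<dots> = (1 / \<gamma>) * measure_pmf.expectation R \<Psi>" by simp
  also have "\<dots> \<le> (1 / \<gamma>) * (\<rho>^m * Tv (x, \<alpha>) + K * Hv x * (\<Sum>t<m. \<rho>^t))"
    using run_bound[of "(x, \<alpha>)" x m] inv gamma_pos unfolding R_def \<Psi>_def
    by (intro mult_left_mono) auto
  also have "\<dots> \<le> \<theta> * \<Phi> (x, \<alpha>)"
  proof -
    define \<Delta> where "\<Delta> = Fv x - Fv xs"
    define N where "N = (norm (x - xs))\<^sup>2"
    define G where "G = Gt \<alpha>"
    have D0: "\<Delta> \<ge> 0" unfolding \<Delta>_def by (rule gap_nonneg)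
    have G0: "G \<ge> 0" unfolding G_def by (rule Gt_nonneg)
    have rm: "\<rho>^m \<ge> 0" using rho_pos by simp
    have hN: "c * N \<le> (2 * c / lam) * \<Delta>"
    proof -
      have "lam / 2 * N \<le> \<Delta>" unfolding N_def \<Delta>_def by (rule sc)
      hence "(2 * c / lam) * (lam / 2 * N) \<le> (2 * c / lam) * \<Delta>"
        using c_pos lam_pos by (intro mult_left_mono) auto
      thus ?thesis using lam_pos by simp
    qed
    have hH: "K * Hv x * W \<le> K * W * \<Delta>"
    proof -
      have "K * W * Hv x \<le> K * W * \<Delta>"
        unfolding \<Delta>_def by (rule mult_left_mono[OF Hv_le]) (use K_nonneg W_pos in simp)
      thus ?thesis by (simp add: mult_ac)
    qed
    have T1: "(\<rho>^m * (2 * c / lam) + K * W) / \<gamma> \<le> \<theta>"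
    proof -
      have e1: "\<rho>^m * (2 * c / lam) / \<gamma> = 2 * c / (\<gamma> * lam) * (1 - 1/\<kappa>) ^ m"
        unfolding \<rho>_def by (simp add: divide_inverse mult_ac)
      have e2: "K * W / \<gamma> = 2 * L * c * \<eta>\<^sup>2 / \<gamma> * (1 + 1/\<beta>) * \<kappa> * (1 - (1 - 1/\<kappa>) ^ m)"
        unfolding K_def W_eq \<rho>_def by (simp add: divide_inverse mult_ac)
      show ?thesis unfolding add_divide_distrib e1 e2 theta_def by (rule max.cobounded1)
    qed
    have T2: "\<rho>^m \<le> \<theta>" unfolding theta_def \<rho>_def by simp
    have "\<rho>^m * Tv (x, \<alpha>) + K * Hv x * W \<le> (\<rho>^m * (2 * c / lam) + K * W) * \<Delta> + \<rho>^m * G"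
    proof -
      have "\<rho>^m * (c * N) \<le> \<rho>^m * ((2 * c / lam) * \<Delta>)" using hN rm by (intro mult_left_mono)
      thus ?thesis using hH unfolding Tv_def N_def G_def by (simp add: algebra_simps)
    qed
    hence "(1 / \<gamma>) * (\<rho>^m * Tv (x, \<alpha>) + K * Hv x * W)
        \<le> ((\<rho>^m * (2 * c / lam) + K * W) / \<gamma>) * \<Delta> + \<rho>^m * (G / \<gamma>)"
    proof -
      have "(1 / \<gamma>) * (\<rho>^m * Tv (x, \<alpha>) + K * Hv x * W)
          \<le> (1 / \<gamma>) * ((\<rho>^m * (2 * c / lam) + K * W) * \<Delta> + \<rho>^m * G)"
        using \<open>\<rho>^m * Tv (x, \<alpha>) + K * Hv x * W \<le> _\<close> gamma_pos by (intro mult_left_mono) auto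
      also have "\<dots> = ((\<rho>^m * (2 * c / lam) + K * W) / \<gamma>) * \<Delta> + \<rho>^m * (G / \<gamma>)"
        by (simp add: divide_inverse algebra_simps)
      finally show ?thesis .
    qed
    also have "\<dots> \<le> \<theta> * \<Delta> + \<theta> * (G / \<gamma>)"
      using T1 T2 D0 G0 gamma_pos by (intro add_mono mult_right_mono) auto
    also have "\<dots> = \<theta> * \<Phi> (x, \<alpha>)" by (simp add: \<Phi>_def \<Delta>_def G_def algebra_simps)
    finally show ?thesis by (simp add: W_sum)
  qed
  finally show ?thesis .
qed

lemma main_step:
  "measure_pmf.expectation (hsag_dist n S \<eta> g m \<kappa> x0 (Suc k)) \<Phi>
     \<le> \<theta> * measure_pmf.expectation (hsag_dist n S \<eta> g m \<kappa> x0 k) \<Phi>"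
proof -
  have fd: "finite (set_pmf (hsag_dist n S \<eta> g m \<kappa> x0 k))" by (rule fin_dist[OF n_pos kappa_gt m_pos])
  have "measure_pmf.expectation (hsag_dist n S \<eta> g m \<kappa> x0 (Suc k)) \<Phi>
      = measure_pmf.expectation (hsag_dist n S \<eta> g m \<kappa> x0 k)
          (\<lambda>st. measure_pmf.expectation (hsag_epoch n S \<eta> g m \<kappa> st) \<Phi>)"
    unfolding hsag_dist.simps by (rule E_bind[OF fd fin_epoch[OF n_pos kappa_gt m_pos]])
  also have "\<dots> \<le> measure_pmf.expectation (hsag_dist n S \<eta> g m \<kappa> x0 k) (\<lambda>st. \<theta> * \<Phi> st)"
  proof (rule E_mono[OF fd])
    fix st assume st: "st \<in> set_pmf (hsag_dist n S \<eta> g m \<kappa> x0 k)"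
    obtain x \<alpha> where e: "st = (x, \<alpha>)" by (cases st)
    have "\<forall>i\<in>{1..n} - S. \<alpha> i = x" using inv_dist st e by blast
    thus "measure_pmf.expectation (hsag_epoch n S \<eta> g m \<kappa> st) \<Phi> \<le> \<theta> * \<Phi> st"
      unfolding e by (rule epoch_bound)
  qed
  also have "\<dots> = \<theta> * measure_pmf.expectation (hsag_dist n S \<eta> g m \<kappa> x0 k) \<Phi>" by simp
  finally show ?thesis .
qed

end

theorem theorem1:
  fixes f :: "nat \<Rightarrow> 'a::euclidean_space \<Rightarrow> real"
    and g :: "nat \<Rightarrow> 'a \<Rightarrow> 'a"
    and n m :: nat and S :: "nat set"
    and L lam \<eta> c \<beta> \<kappa> \<gamma> \<theta> :: real
    and x0 xs :: 'a
  assumes n_pos: "n \<ge> 1"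
    and conv: "\<And>i. i \<in> {1..n} \<Longrightarrow> convex_on UNIV (f i)"
    and grad: "\<And>i x. i \<in> {1..n} \<Longrightarrow> (f i has_derivative (\<lambda>h. inner (g i x) h)) (at x)"
    and lip: "\<And>i x y. i \<in> {1..n} \<Longrightarrow> norm (g i x - g i y) \<le> L * norm (x - y)"
    and lam_pos: "lam > 0"
    and sconv: "strongly_convex_on UNIV lam (\<lambda>x. (1 / real n) * (\<Sum>i\<in>{1..n}. f i x))"
    and xs_min: "\<And>y. (1 / real n) * (\<Sum>i\<in>{1..n}. f i xs) \<le> (1 / real n) * (\<Sum>i\<in>{1..n}. f i y)"
    and S_sub: "S \<subseteq> {1..n}"
    and eta_pos: "\<eta> > 0" and m_pos: "m \<ge> 1"
    and c_pos: "c > 0" and beta_pos: "\<beta> > 0" and kappa_gt: "\<kappa> > 1"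
    and gamma_def: "\<gamma> = \<kappa> * (1 - (1 - 1/\<kappa>) ^ m) *
        (2 * c * \<eta> * (1 - L * \<eta> * (1 + \<beta>)) - 1 / real n - 2 * c / (\<kappa> * lam))"
    and theta_def: "\<theta> = max (2 * c / (\<gamma> * lam) * (1 - 1/\<kappa>) ^ m
          + 2 * L * c * \<eta>\<^sup>2 / \<gamma> * (1 + 1/\<beta>) * \<kappa> * (1 - (1 - 1/\<kappa>) ^ m))
        ((1 - 1/\<kappa>) ^ m)"
    and cond1: "1/\<kappa> + 2 * L * c * \<eta>\<^sup>2 * (1 + 1/\<beta>) \<le> 1 / real n"
    and gamma_pos: "\<gamma> > 0"
    and theta_lt: "\<theta> < 1"
  shows "\<forall>k. measure_pmf.expectation (hsag_dist n S \<eta> g m \<kappa> x0 (Suc k))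
              (\<lambda>(xt, \<alpha>). (1 / real n) * (\<Sum>i\<in>{1..n}. f i xt) - (1 / real n) * (\<Sum>i\<in>{1..n}. f i xs)
                           + (1 / \<gamma>) * Gtilde n S f g xs \<alpha>)
           \<le> \<theta> * measure_pmf.expectation (hsag_dist n S \<eta> g m \<kappa> x0 k)
              (\<lambda>(xt, \<alpha>). (1 / real n) * (\<Sum>i\<in>{1..n}. f i xt) - (1 / real n) * (\<Sum>i\<in>{1..n}. f i xs)
                           + (1 / \<gamma>) * Gtilde n S f g xs \<alpha>)"
proof -
  interpret hs2 f g n S L lam \<eta> c \<beta> \<kappa> xs m \<gamma> \<theta>
    by unfold_locales (use n_pos conv grad lip lam_pos sconv xs_min S_sub eta_pos c_pos beta_pos kappa_gt cond1
        m_pos gamma_def theta_def gamma_pos in auto)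
  have fe: "(\<lambda>(xt, \<alpha>). (1 / real n) * (\<Sum>i\<in>{1..n}. f i xt) - (1 / real n) * (\<Sum>i\<in>{1..n}. f i xs)
                           + (1 / \<gamma>) * Gtilde n S f g xs \<alpha>) = \<Phi>"
    by (auto simp: fun_eq_iff \<Phi>_def Fv_def Gt_def)
  show ?thesis unfolding fe using main_step by blast
qed

end
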